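(* Let $s\in(0,1)$, $N>2s$, $1<p<\frac{N+2s}{N-2s}$, $0<a\in L^\infty(\mathbb R^N)$, and let $f\in H^{-s}(\mathbb R^N)$ be a nonnegative functional with $f\not\equiv0$. Let $C_p:=(p\|a\|_{L^\infty})^{-\frac1{p-1}}\frac{p-1}{p}$ and assume $$\inf_{u\in H^s(\mathbb R^N),\ \|u\|_{L^{p+1}(\mathbb R^N)}=1}\Big\{C_p\|u\|_{H^s}^{\frac{2p}{p-1}}-\langle f,u\rangle\Big\}>0.$$ Then $c_0<c_1$, where $c_0:=\inf_{U_1}I_{a,f}$ and $c_1:=\inf_U I_{a,f}$.
   Context: $\|u\|_{H^s}^2=\int_{\mathbb R^N}|u|^2+\iint_{\mathbb R^{2N}}\frac{|u(x)-u(y)|^2}{|x-y|^{N+2s}}dx\,dy$; $\langle\cdot,\cdot\rangle$ is the $H^{-s}$–$H^s$ duality; $f$ nonnegative means $\langle f,u\rangle\ge0$ for all nonnegative $u\in H^s$. $I_{a,f}(u)=\frac12\|u\|_{H^s}^2-\frac1{p+1}\int_{\mathbb R^N}a(x)u_+^{p+1}dx-\langle f,u\rangle$, $u_+=\max\{u,0\}$. With $g(u):=\|u\|_{H^s}^2-p\|a\|_{L^\infty}\|u\|_{L^{p+1}}^{p+1}$: $U_1:=\{u\in H^s: u=0\text{ or }g(u)>0\}$ and $U:=\{u\in H^s\setminus\{0\}: g(u)=0\}$. *)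

theory Defs
  imports "HOL-Analysis.Analysis" "HOL-Probability.Essential_Supremum"
begin

text \<open>Functions on R^N are modelled as functions on a Euclidean space 'a, N = DIM('a),
  with Lebesgue measure lborel.\<close>

definition gagliardo :: "real \<Rightarrow> ('a::euclidean_space \<Rightarrow> real) \<Rightarrow> ennreal" where
  "gagliardo s u = (\<integral>\<^sup>+ x. \<integral>\<^sup>+ y. ennreal ((u x - u y)\<^sup>2 / norm (x - y) powr (real DIM('a) + 2 * s)) \<partial>lborel \<partial>lborel)"

definition Hs :: "real \<Rightarrow> ('a::euclidean_space \<Rightarrow> real) set" where
  "Hs s = {u. u \<in> borel_measurable lborel \<and> (\<integral>\<^sup>+ x. ennreal ((u x)\<^sup>2) \<partial>lborel) < \<infinity>
             \<and> gagliardo s u < \<infinity>}"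

definition Hs_norm_sq :: "real \<Rightarrow> ('a::euclidean_space \<Rightarrow> real) \<Rightarrow> real" where
  "Hs_norm_sq s u = (\<integral> x. (u x)\<^sup>2 \<partial>lborel) + enn2real (gagliardo s u)"

definition Hs_norm :: "real \<Rightarrow> ('a::euclidean_space \<Rightarrow> real) \<Rightarrow> real" where
  "Hs_norm s u = sqrt (Hs_norm_sq s u)"

definition Lp_norm :: "real \<Rightarrow> ('a::euclidean_space \<Rightarrow> real) \<Rightarrow> real" where
  "Lp_norm q u = (\<integral> x. \<bar>u x\<bar> powr q \<partial>lborel) powr (1 / q)"

definition Linf_norm :: "('a::euclidean_space \<Rightarrow> real) \<Rightarrow> real" where
  "Linf_norm a = real_of_ereal (esssup lborel (\<lambda>x. ereal \<bar>a x\<bar>))"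

definition dual_Hs :: "real \<Rightarrow> (('a::euclidean_space \<Rightarrow> real) \<Rightarrow> real) \<Rightarrow> bool" where
  "dual_Hs s f \<longleftrightarrow>
     (\<forall>u\<in>Hs s. \<forall>v\<in>Hs s. f (\<lambda>x. u x + v x) = f u + f v) \<and>
     (\<forall>u\<in>Hs s. \<forall>c::real. f (\<lambda>x. c * u x) = c * f u) \<and>
     (\<exists>C. \<forall>u\<in>Hs s. \<bar>f u\<bar> \<le> C * Hs_norm s u)"

definition nonneg_functional :: "real \<Rightarrow> (('a::euclidean_space \<Rightarrow> real) \<Rightarrow> real) \<Rightarrow> bool" where
  "nonneg_functional s f \<longleftrightarrow> (\<forall>u\<in>Hs s. (AE x in lborel. u x \<ge> 0) \<longrightarrow> f u \<ge> 0)"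

definition I_af :: "real \<Rightarrow> real \<Rightarrow> ('a::euclidean_space \<Rightarrow> real) \<Rightarrow> (('a \<Rightarrow> real) \<Rightarrow> real)
                     \<Rightarrow> ('a \<Rightarrow> real) \<Rightarrow> real" where
  "I_af s p a f u = Hs_norm_sq s u / 2
     - (1 / (p + 1)) * (\<integral> x. a x * (max (u x) 0) powr (p + 1) \<partial>lborel) - f u"

definition g_fun :: "real \<Rightarrow> real \<Rightarrow> ('a::euclidean_space \<Rightarrow> real) \<Rightarrow> ('a \<Rightarrow> real) \<Rightarrow> real" where
  "g_fun s p a u = Hs_norm_sq s u - p * Linf_norm a * Lp_norm (p + 1) u powr (p + 1)"

text \<open>u = 0 in H^s means u vanishes almost everywhere.\<close>
definition U1_set :: "real \<Rightarrow> real \<Rightarrow> ('a::euclidean_space \<Rightarrow> real) \<Rightarrow> ('a \<Rightarrow> real) set" where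
  "U1_set s p a = {u \<in> Hs s. (AE x in lborel. u x = 0) \<or> g_fun s p a u > 0}"

definition U_set :: "real \<Rightarrow> real \<Rightarrow> ('a::euclidean_space \<Rightarrow> real) \<Rightarrow> ('a \<Rightarrow> real) set" where
  "U_set s p a = {u \<in> Hs s. \<not> (AE x in lborel. u x = 0) \<and> g_fun s p a u = 0}"

end

theory Submission
  imports Defs
begin


lemma bern:
  fixes q h :: real
  assumes "q \<ge> 1" "0 \<le> h" "h \<le> 1"
  shows "1 - q * h \<le> (1 - h) powr q"
proof (cases "h = 1")
  case True then show ?thesis using assms by simp
next
  case False
  then have x: "1 - h > 0" using assms by simp
  have d: "((\<lambda>x. x powr q) has_field_derivative q * 1 powr (q - 1)) (at 1 within {0<..})"
    by (rule has_field_derivative_at_within) (rule has_real_derivative_powr, simp)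
  have "(1 - h) powr q - 1 powr q \<ge> (q * 1 powr (q - 1)) * ((1 - h) - 1)"
    by (rule convex_on_imp_above_tangent[OF powr_convex[OF assms(1)] _ _ _ d])
       (use x in \<open>auto simp: convex_connected interior_open\<close>)
  then show ?thesis by (simp add: algebra_simps)
qed

lemma gain:
  fixes p h A B F :: real
  assumes "p > 1" "0 < h" "h \<le> 1" "0 \<le> B" "B \<le> A / p"
  shows "(A / 2 - B / (p+1) - F)
         - ((1-h)^2 * A / 2 - (1-h) powr (p+1) * B / (p+1) - (1-h) * F)
     \<ge> h * ((p-1)/p*A - F) - A * h^2 / 2"
proof -
  have b: "1 - (p+1) * h \<le> (1 - h) powr (p+1)" using bern[of "p+1" h] assms by simp
  have "B * (1 - (1 - h) powr (p+1)) \<le> B * ((p+1) * h)"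
    using b assms by (intro mult_left_mono) auto
  then have b2: "B * (1 - (1 - h) powr (p+1)) / (p+1) \<le> B * h"
    using assms by (simp add: divide_le_eq mult.commute mult.left_commute)
  have b3: "h * B \<le> h * (A / p)" using assms by (intro mult_left_mono) auto
  have "(A / 2 - B / (p+1) - F)
         - ((1-h)^2 * A / 2 - (1-h) powr (p+1) * B / (p+1) - (1-h) * F)
       = A * h - A * h^2 / 2 - B * (1 - (1 - h) powr (p+1)) / (p+1) - h * F"
    by (simp add: power2_eq_square algebra_simps diff_divide_distrib add_divide_distrib)
  also have "\<dots> \<ge> A * h - A * h^2 / 2 - h * (A/p) - h * F" using b2 b3 by (simp add: mult.commute)
  moreover have "A * h - A * h^2 / 2 - h * (A/p) - h * F = h * ((p-1)/p*A - F) - A * h^2 / 2"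
    using assms by (simp add: field_simps)
  ultimately show ?thesis by linarith
qed

lemma key_alg:
  fixes p L r A :: real
  assumes "p > 1" "L > 0" "r > 0" "A = p * L * r powr (p+1)"
  shows "(p*L) powr (-1/(p-1)) * ((p-1)/p) * sqrt ((1/r)^2 * A) powr (2*p/(p-1)) = (p-1)/p * A / r"
proof -
  have pL: "p * L > 0" using assms by simp
  have rp: "r powr (p+1) = r powr (p-1) * r^2"
  proof -
    have "r powr (p+1) = r powr ((p-1) + 2)" by (simp add: add.commute)
    also have "\<dots> = r powr (p-1) * r powr 2" by (rule powr_add)
    finally show ?thesis using assms(3) by (simp add: powr_numeral)
  qed
  define X where "X = (1/r)^2 * A"
  have X: "X = (p*L) * r powr (p-1)" unfolding X_def assms(4) rp using assms(3)
    by (simp add: power2_eq_square)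
  have X0: "X \<ge> 0" using X pL by simp
  have "sqrt X powr (2*p/(p-1)) = (X powr (1/2)) powr (2*p/(p-1))"
    using X0 by (simp add: powr_half_sqrt)
  also have "\<dots> = X powr (p/(p-1))" by (simp add: powr_powr)
  also have "\<dots> = (p*L) powr (p/(p-1)) * (r powr (p-1)) powr (p/(p-1))"
    unfolding X using pL assms by (simp add: powr_mult)
  also have "(r powr (p-1)) powr (p/(p-1)) = r powr p" using assms by (simp add: powr_powr)
  finally have s: "sqrt X powr (2*p/(p-1)) = (p*L) powr (p/(p-1)) * r powr p" .
  have e: "(p*L) powr (-1/(p-1)) * (p*L) powr (p/(p-1)) = p * L"
  proof -
    have "(p*L) powr (-1/(p-1)) * (p*L) powr (p/(p-1)) = (p*L) powr (-1/(p-1) + p/(p-1))"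
      by (rule powr_add[symmetric])
    also have "-1/(p-1) + p/(p-1) = 1"
    proof -
      have ne: "p - 1 \<noteq> 0" using assms by simp
      have "-1/(p-1) + p/(p-1) = (-1 + p)/(p-1)" by (rule add_divide_distrib[symmetric])
      also have "-1 + p = p - 1" by simp
      finally show ?thesis using ne by simp
    qed
    finally show ?thesis using pL by simp
  qed
  have r2: "A / r = p * L * r powr p"
  proof -
    have "r powr (p+1) = r powr p * r" using assms by (simp add: powr_add)
    then show ?thesis using assms(3,4) by simp
  qed
  have "(p*L) powr (-1/(p-1)) * ((p-1)/p) * sqrt X powr (2*p/(p-1))
     = ((p-1)/p) * (((p*L) powr (-1/(p-1)) * (p*L) powr (p/(p-1))) * r powr p)"
    unfolding s by (simp add: algebra_simps)
  also have "\<dots> = (p-1)/p * (A / r)" unfolding e r2 by (simp add: algebra_simps)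
  finally show ?thesis unfolding X_def by simp
qed

lemma real_core:
  fixes p L r A B F K \<delta> :: real
  assumes p: "p > 1" and L: "L > 0" and r: "r > 0" and A: "A = p*L*r powr (p+1)"
    and B0: "0 \<le> B" and B1: "B \<le> A/p" and F: "\<bar>F\<bar> \<le> K * sqrt A" and K: "K \<ge> 0"
    and d0: "\<delta> > 0" and dD: "\<delta> * r < (p-1)/p*A - F"
  shows "(A/2 - B/(p+1) - F) \<ge> 0 \<or> (\<exists>h. 0 < h \<and> h < 1 \<and>
     (A/2 - B/(p+1) - F) \<ge> ((1-h)^2*A/2 - (1-h) powr (p+1)*B/(p+1) - (1-h)*F)
        + min (\<delta>^2/(2*p*L)) (min (\<delta>^2/(2*((2*K/((p-1)/p))^2 + 1))) (((p-1)/p)^2*((2*K/((p-1)/p))^2 + 1)/8)))"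
proof -
  define c where "c = (p-1)/p"
  define A0 where "A0 = (2*K/c)^2 + 1"
  define D where "D = c*A - F"
  have c0: "c > 0" using p by (simp add: c_def)
  have A0p: "A0 > 0" by (simp add: A0_def add_nonneg_pos)
  have Apos: "A > 0" using A p L r by simp
  have Dpos: "D > 0" using dD d0 r unfolding D_def c_def by (smt (verit) mult_pos_pos)
  have dD': "\<delta> * r < D" using dD unfolding D_def c_def .
  show ?thesis
  proof (cases "D \<ge> A")
    case True
    have "A / 2 - B / (p+1) - F \<ge> 1 * ((p-1)/p*A - F) - A * 1^2 / 2"
      using gain[of p 1 B A F] p B0 B1 by simp
    then have "A / 2 - B / (p+1) - F \<ge> D - A/2" unfolding D_def c_def by simp
    then show ?thesis using True Apos by auto
  next
    case False
    define h where "h = D / A"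
    have h0: "0 < h" "h < 1" using False Dpos Apos by (auto simp: h_def)
    have g: "(A / 2 - B / (p+1) - F) - ((1-h)^2*A/2 - (1-h) powr (p+1)*B/(p+1) - (1-h)*F)
       \<ge> h * ((p-1)/p*A - F) - A * h^2 / 2"
      using gain[of p h B A F] p B0 B1 h0 by simp
    have hh: "h * ((p-1)/p*A - F) - A * h^2 / 2 = D^2 / (2*A)"
      using Apos unfolding h_def D_def c_def by (simp add: field_simps power2_eq_square)
    have ga: "D^2/(2*A) \<ge> min (\<delta>^2/(2*p*L)) (min (\<delta>^2/(2*A0)) (c^2*A0/8))"
    proof (cases "A \<ge> A0")
      case True
      have "sqrt A \<ge> sqrt A0" using True by simp
      moreover have "sqrt A0 \<ge> 2*K/c"
      proof -
        have "sqrt A0 \<ge> sqrt ((2*K/c)^2)" unfolding A0_def by (rule real_sqrt_le_mono) simp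
        then show ?thesis using K c0 by simp
      qed
      ultimately have sA: "2*K/c \<le> sqrt A" by linarith
      have "K * sqrt A \<le> (c * sqrt A / 2) * sqrt A"
        using sA c0 Apos by (intro mult_right_mono) (auto simp: field_simps)
      also have "\<dots> = c * A / 2" using Apos by (simp add: power2_eq_square[symmetric])
      finally have "D \<ge> c*A/2" using F unfolding D_def by linarith
      then have "D^2 \<ge> (c*A/2)^2" using c0 Apos by (intro power_mono) auto
      then have "D^2/(2*A) \<ge> (c*A/2)^2/(2*A)" using Apos by (intro divide_right_mono) auto
      moreover have "(c*A/2)^2/(2*A) = c^2*A/8" using Apos by (simp add: field_simps power2_eq_square)
      moreover have "c^2*A/8 \<ge> c^2*A0/8" using True by (simp add: mult_left_mono)
      ultimately show ?thesis by linarith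
    next
      case notA: False
      show ?thesis
      proof (cases "r \<le> 1")
        case True
        have "r powr (p+1) \<le> r powr 2" using True r p by (intro powr_mono') auto
        then have "r powr (p+1) \<le> r^2" using r by (simp add: powr_numeral)
        then have Ale: "A \<le> p*L*r^2" unfolding A using p L by simp
        have "D^2 \<ge> (\<delta>*r)^2" using dD' d0 r by (intro power_mono) auto
        then have "D^2 \<ge> \<delta>^2 * r^2" by (simp add: power_mult_distrib)
        moreover have "\<delta>^2 * r^2 \<ge> \<delta>^2 * (A/(p*L))" using Ale p L
          by (intro mult_left_mono) (auto simp: field_simps)
        ultimately have "D^2 \<ge> \<delta>^2 * (A/(p*L))" by linarith
        then have "D^2/(2*A) \<ge> \<delta>^2 * (A/(p*L)) / (2*A)" using Apos by (intro divide_right_mono) auto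
        moreover have "\<delta>^2 * (A/(p*L)) / (2*A) = \<delta>^2/(2*p*L)" using Apos p L by (simp add: field_simps)
        ultimately show ?thesis by linarith
      next
        case False
        have "\<delta> < D" using dD' False d0 by (smt (verit) mult_less_cancel_left2)
        then have "D^2 \<ge> \<delta>^2" using d0 by (intro power_mono) auto
        then have "D^2/(2*A) \<ge> \<delta>^2/(2*A)" using Apos by (intro divide_right_mono) auto
        moreover have "\<delta>^2/(2*A) \<ge> \<delta>^2/(2*A0)" using notA Apos by (intro divide_left_mono) auto
        ultimately show ?thesis by linarith
      qed
    qed
    show ?thesis using g hh ga h0 unfolding c_def A0_def by (intro disjI2 exI[of _ h]) auto
  qed
qed



lemma gag_scale:
  fixes u :: "'a::euclidean_space \<Rightarrow> real"
  assumes [measurable]: "u \<in> borel_measurable lborel"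
  shows "gagliardo s (\<lambda>x. c * u x) = ennreal (c^2) * gagliardo s u"
proof -
  have e: "ennreal ((c * u x - c * u y)\<^sup>2 / norm (x - y) powr (real DIM('a) + 2 * s))
      = ennreal (c^2) * ennreal ((u x - u y)\<^sup>2 / norm (x - y) powr (real DIM('a) + 2 * s))" for x y
  proof -
    have "(c * u x - c * u y)\<^sup>2 / norm (x - y) powr (real DIM('a) + 2 * s)
        = c^2 * ((u x - u y)\<^sup>2 / norm (x - y) powr (real DIM('a) + 2 * s))"
    proof -
      have "(c * u x - c * u y)\<^sup>2 = c^2 * (u x - u y)\<^sup>2" by (simp add: power2_eq_square algebra_simps)
      then show ?thesis by simp
    qed
    then show ?thesis by (simp add: ennreal_mult[symmetric])
  qed
  have i: "(\<integral>\<^sup>+ y. ennreal ((c * u x - c * u y)\<^sup>2 / norm (x - y) powr (real DIM('a) + 2 * s)) \<partial>lborel)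
     = ennreal (c^2) * (\<integral>\<^sup>+ y. ennreal ((u x - u y)\<^sup>2 / norm (x - y) powr (real DIM('a) + 2 * s)) \<partial>lborel)" for x
    unfolding e by (rule nn_integral_cmult) measurable
  show ?thesis unfolding gagliardo_def i
    by (rule nn_integral_cmult) measurable
qed

lemma Hs_scale:
  assumes "u \<in> Hs s"
  shows "(\<lambda>x. c * u x) \<in> Hs s"
proof -
  have m [measurable]: "u \<in> borel_measurable lborel" using assms by (simp add: Hs_def)
  have "(\<integral>\<^sup>+ x. ennreal ((c * u x)\<^sup>2) \<partial>lborel) = ennreal (c^2) * (\<integral>\<^sup>+ x. ennreal ((u x)\<^sup>2) \<partial>lborel)"
    by (subst nn_integral_cmult[symmetric]) (auto simp: power_mult_distrib ennreal_mult)
  then have "(\<integral>\<^sup>+ x. ennreal ((c * u x)\<^sup>2) \<partial>lborel) < \<infinity>"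
    using assms by (simp add: Hs_def ennreal_mult_less_top)
  moreover have "gagliardo s (\<lambda>x. c * u x) < \<infinity>"
    using assms by (simp add: gag_scale Hs_def ennreal_mult_less_top)
  ultimately show ?thesis by (simp add: Hs_def)
qed

lemma Hs_norm_sq_scale:
  assumes "u \<in> Hs s"
  shows "Hs_norm_sq s (\<lambda>x. c * u x) = c^2 * Hs_norm_sq s u"
proof -
  have m [measurable]: "u \<in> borel_measurable lborel" using assms by (simp add: Hs_def)
  have "(\<integral>x. (c * u x)\<^sup>2 \<partial>lborel) = c^2 * (\<integral>x. (u x)\<^sup>2 \<partial>lborel)"
    by (simp add: power_mult_distrib)
  moreover have "enn2real (gagliardo s (\<lambda>x. c * u x)) = c^2 * enn2real (gagliardo s u)"
    by (simp add: gag_scale enn2real_mult)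
  ultimately show ?thesis by (simp add: Hs_norm_sq_def algebra_simps)
qed

lemma Hs_norm_sq_nonneg: "Hs_norm_sq s u \<ge> 0"
  unfolding Hs_norm_sq_def by (intro add_nonneg_nonneg integral_nonneg) auto

lemma Lp_nonneg: "Lp_norm q u \<ge> 0"
  unfolding Lp_norm_def by simp

lemma Lp_scale:
  assumes "q > 0"
  shows "Lp_norm q (\<lambda>x. c * u x) = \<bar>c\<bar> * Lp_norm q u"
proof -
  have "(\<integral>x. \<bar>c * u x\<bar> powr q \<partial>lborel) = \<bar>c\<bar> powr q * (\<integral>x. \<bar>u x\<bar> powr q \<partial>lborel)"
    by (simp add: abs_mult powr_mult)
  moreover have "(\<bar>c\<bar> powr q * (\<integral>x. \<bar>u x\<bar> powr q \<partial>lborel)) powr (1/q)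
      = (\<bar>c\<bar> powr q) powr (1/q) * (\<integral>x. \<bar>u x\<bar> powr q \<partial>lborel) powr (1/q)"
    by (rule powr_mult)
  moreover have "(\<bar>c\<bar> powr q) powr (1/q) = \<bar>c\<bar>" using assms by (simp add: powr_powr)
  ultimately show ?thesis unfolding Lp_norm_def by simp
qed

lemma B_scale:
  fixes t :: real
  assumes "t \<ge> 0" "q > 0"
  shows "(\<integral>x. a x * (max (t * u x) 0) powr q \<partial>lborel) = t powr q * (\<integral>x. a x * (max (u x) 0) powr q \<partial>lborel)"
proof -
  have "a x * (max (t * u x) 0) powr q = t powr q * (a x * (max (u x) 0) powr q)" for x
  proof -
    have "max (t * u x) 0 = t * max (u x) 0" using assms by (simp add: max_mult_distrib_left)
    then show ?thesis using assms by (simp add: powr_mult)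
  qed
  then have eq: "(\<lambda>x. a x * (max (t * u x) 0) powr q) = (\<lambda>x. t powr q * (a x * (max (u x) 0) powr q))"
    by (rule ext)
  show ?thesis by (simp only: eq integral_mult_right_zero)
qed

lemma f_scale:
  assumes "dual_Hs s f" "u \<in> Hs s"
  shows "f (\<lambda>x. c * u x) = c * f u"
  using assms by (simp add: dual_Hs_def)

lemma f_bound:
  assumes "dual_Hs s f"
  obtains K where "K \<ge> 0" "\<And>u. u \<in> Hs s \<Longrightarrow> \<bar>f u\<bar> \<le> K * sqrt (Hs_norm_sq s u)"
proof -
  obtain C where C: "\<forall>u\<in>Hs s. \<bar>f u\<bar> \<le> C * Hs_norm s u" using assms by (auto simp: dual_Hs_def)
  have "\<bar>f u\<bar> \<le> max C 0 * sqrt (Hs_norm_sq s u)" if "u \<in> Hs s" for u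
  proof -
    have "C * Hs_norm s u \<le> max C 0 * Hs_norm s u"
      using Hs_norm_sq_nonneg[of s u] by (intro mult_right_mono) (auto simp: Hs_norm_def)
    then show ?thesis using C that Hs_norm_sq_nonneg[of s u] by (force simp: Hs_norm_def)
  qed
  then show ?thesis using that[of "max C 0"] by auto
qed

lemma I_scale:
  assumes "dual_Hs s f" "u \<in> Hs s" "t \<ge> 0" "p > 0"
  shows "I_af s p a f (\<lambda>x. t * u x) = t^2 * Hs_norm_sq s u / 2
     - t powr (p+1) * (\<integral> x. a x * (max (u x) 0) powr (p + 1) \<partial>lborel) / (p+1) - t * f u"
  using assms B_scale[of t "p+1" a u] by (simp add: I_af_def Hs_norm_sq_scale f_scale)

lemma Linf_AE:
  fixes a :: "'a::euclidean_space \<Rightarrow> real"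
  assumes [measurable]: "a \<in> borel_measurable lborel" and "\<exists>C. AE x in lborel. \<bar>a x\<bar> \<le> C"
  shows "AE x in lborel. \<bar>a x\<bar> \<le> Linf_norm a"
proof -
  obtain C where C: "AE x in lborel. \<bar>a x\<bar> \<le> C" using assms by auto
  have le: "esssup lborel (\<lambda>x. ereal \<bar>a x\<bar>) \<le> ereal C"
    by (rule esssup_I) (use C in auto)
  show ?thesis using esssup_AE[of "\<lambda>x. ereal \<bar>a x\<bar>" lborel]
  proof eventually_elim
    case (elim x)
    then show ?case using le unfolding Linf_norm_def
      by (cases "esssup lborel (\<lambda>x. ereal \<bar>a x\<bar>)") auto
  qed
qed

lemma Hs_pos:
  assumes "u \<in> Hs s" "\<not> (AE x in lborel. u x = 0)"
  shows "Hs_norm_sq s u > 0"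
proof -
  have m [measurable]: "u \<in> borel_measurable lborel" and fin: "(\<integral>\<^sup>+ x. ennreal ((u x)\<^sup>2) \<partial>lborel) < \<infinity>"
    using assms by (auto simp: Hs_def)
  have int: "integrable lborel (\<lambda>x. (u x)\<^sup>2)"
    by (rule integrableI_bounded) (use fin in auto)
  have "(\<integral>x. (u x)\<^sup>2 \<partial>lborel) \<noteq> 0"
  proof
    assume "(\<integral>x. (u x)\<^sup>2 \<partial>lborel) = 0"
    then have "AE x in lborel. (u x)\<^sup>2 = 0" using integral_nonneg_eq_0_iff_AE[OF int] by auto
    then have "AE x in lborel. u x = 0" by auto
    then show False using assms by auto
  qed
  moreover have "(\<integral>x. (u x)\<^sup>2 \<partial>lborel) \<ge> 0" by simp
  ultimately have "(\<integral>x. (u x)\<^sup>2 \<partial>lborel) > 0" by linarith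
  then show ?thesis unfolding Hs_norm_sq_def by (intro add_pos_nonneg) auto
qed



lemma lowb:
  fixes p A B F K :: real
  assumes "p > 1" "A \<ge> 0" "0 \<le> B" "B \<le> A/p" "\<bar>F\<bar> \<le> K * sqrt A" "K \<ge> 0"
  shows "A/2 - B/(p+1) - F \<ge> - (K^2 / (4 * (1/2 - 1/(p*(p+1)))))"
proof -
  define \<alpha> where "\<alpha> = 1/2 - 1/(p*(p+1))"
  have "p*(p+1) > 1*2" using assms(1) by (intro mult_strict_mono) auto
  then have pp: "p*(p+1) > 2" by simp
  have al: "\<alpha> > 0" unfolding \<alpha>_def using pp by (simp add: field_simps)
  have "B/(p+1) \<le> (A/p)/(p+1)" using assms by (intro divide_right_mono) auto
  also have "(A/p)/(p+1) = A * (1/(p*(p+1)))" by simp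
  finally have b1: "B/(p+1) \<le> A * (1/(p*(p+1)))" .
  have b2: "F \<le> K * sqrt A" using assms(5) by linarith
  have b3: "\<alpha> * A = A/2 - A * (1/(p*(p+1)))" unfolding \<alpha>_def by (simp add: algebra_simps)
  have b: "A/2 - B/(p+1) - F \<ge> \<alpha> * A - K * sqrt A" using b1 b2 b3 by linarith
  define x where "x = sqrt A"
  have xA: "A = x^2" unfolding x_def using assms(2) by simp
  have sA: "sqrt A = x" by (simp add: x_def)
  have e: "\<alpha> * x^2 - K * x + K^2/(4*\<alpha>) = (2*\<alpha>*x - K)^2/(4*\<alpha>)"
    using al by (simp add: field_simps power2_eq_square)
  have "\<alpha> * A - K * sqrt A + K^2/(4*\<alpha>) = (2*\<alpha>*x - K)^2/(4*\<alpha>)"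
    using e xA sA by simp
  also have "\<dots> \<ge> 0" using al by simp
  finally show ?thesis using b unfolding \<alpha>_def[symmetric] by linarith
qed

theorem lemma3p2:
  fixes s p :: real and a :: "'a::euclidean_space \<Rightarrow> real"
    and f :: "('a \<Rightarrow> real) \<Rightarrow> real"
  assumes "0 < s" "s < 1"
    and "real DIM('a) > 2 * s"
    and "1 < p" "p < (real DIM('a) + 2 * s) / (real DIM('a) - 2 * s)"
    and "a \<in> borel_measurable lborel" "\<exists>C. AE x in lborel. \<bar>a x\<bar> \<le> C"
    and "AE x in lborel. a x > 0"
    and "dual_Hs s f" "nonneg_functional s f" "\<exists>u\<in>Hs s. f u \<noteq> 0"
    and "(INF u\<in>{u\<in>Hs s. Lp_norm (p + 1) u = 1}.
           ereal ((p * Linf_norm a) powr (- 1 / (p - 1)) * ((p - 1) / p)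
                  * Hs_norm s u powr (2 * p / (p - 1)) - f u)) > 0"
  shows "(INF u\<in>U1_set s p a. ereal (I_af s p a f u)) < (INF u\<in>U_set s p a. ereal (I_af s p a f u))"
proof -
  have p: "p > 1" by fact
  have dual: "dual_Hs s f" by fact
  have am [measurable]: "a \<in> borel_measurable lborel" by fact
  obtain K where K0: "K \<ge> 0" and Kb: "\<And>u. u \<in> Hs s \<Longrightarrow> \<bar>f u\<bar> \<le> K * sqrt (Hs_norm_sq s u)"
    using f_bound[OF dual] by blast
  define L where "L = Linf_norm a"
  have aL: "AE x in lborel. \<bar>a x\<bar> \<le> L" unfolding L_def by (rule Linf_AE) (use assms(6,7) in auto)
  define Bf where "Bf = (\<lambda>u. \<integral> x. a x * (max (u x) 0) powr (p + 1) \<partial>lborel)"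
  have B0: "Bf u \<ge> 0" for u unfolding Bf_def
    by (rule integral_nonneg_AE) (use assms(8) in \<open>auto elim!: eventually_mono\<close>)
  have Ieq: "I_af s p a f u = Hs_norm_sq s u / 2 - Bf u / (p+1) - f u" for u
    by (simp add: I_af_def Bf_def)
  have Isc: "I_af s p a f (\<lambda>x. t * u x) = t^2 * Hs_norm_sq s u / 2 - t powr (p+1) * Bf u / (p+1) - t * f u"
    if "u \<in> Hs s" "t \<ge> 0" for u t
    using I_scale[OF dual that, of p a] p by (simp add: Bf_def)
  define c0 where "c0 = (INF u\<in>U1_set s p a. ereal (I_af s p a f u))"
  have c0le: "c0 \<le> ereal (I_af s p a f u)" if "u \<in> U1_set s p a" for u
    unfolding c0_def using that by (rule INF_lower)
  obtain \<eta> where eta: "\<eta> > 0" "c0 \<le> ereal (- \<eta>)"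
  proof -
    obtain u0 where u0: "u0 \<in> Hs s" "f u0 \<noteq> 0" using assms(11) by blast
    define v where "v = (if f u0 > 0 then u0 else (\<lambda>x. (-1) * u0 x))"
    have vH: "v \<in> Hs s" unfolding v_def using u0 Hs_scale[OF u0(1), of "-1"] by auto
    have F0: "f v > 0" unfolding v_def using u0 f_scale[OF dual u0(1), of "-1"] by auto
    define A0 where "A0 = Hs_norm_sq s v"
    have A0p: "A0 > 0"
    proof -
      have "A0 \<ge> 0" unfolding A0_def by (rule Hs_norm_sq_nonneg)
      moreover have "A0 \<noteq> 0" using Kb[OF vH] F0 unfolding A0_def by auto
      ultimately show ?thesis by simp
    qed
    define R0 where "R0 = Lp_norm (p+1) v powr (p+1)"
    have R0: "R0 \<ge> 0" unfolding R0_def by simp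
    define X where "X = A0 / (2*p*\<bar>L\<bar>*R0 + 1)"
    have den: "2*p*\<bar>L\<bar>*R0 + 1 > 0" using p R0 by (simp add: add_nonneg_pos)
    have Xp: "X > 0" unfolding X_def using A0p den by simp
    define t where "t = min (f v / A0) (min 1 (X powr (1/(p-1))))"
    have t0: "t > 0" "t \<le> 1" using F0 A0p Xp by (auto simp: t_def)
    have tF: "t * A0 \<le> f v" using A0p by (simp add: t_def min_def field_simps split: if_splits)
    have tX: "t powr (p-1) \<le> X"
    proof -
      have "t powr (p-1) \<le> (X powr (1/(p-1))) powr (p-1)"
        using t0 p by (intro powr_mono2) (auto simp: t_def)
      also have "\<dots> = X" using p Xp by (simp add: powr_powr)
      finally show ?thesis .
    qed
    have tH: "(\<lambda>x. t * v x) \<in> Hs s" using vH Hs_scale by auto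
    have tp: "t powr (p+1) = t powr (p-1) * t^2"
    proof -
      have "t powr (p+1) = t powr ((p-1) + 2)" by (simp add: add.commute)
      also have "\<dots> = t powr (p-1) * t powr 2" by (rule powr_add)
      finally show ?thesis using t0 by (simp add: powr_numeral)
    qed
    have g: "g_fun s p a (\<lambda>x. t * v x) > 0"
    proof -
      have lt: "Lp_norm (p+1) (\<lambda>x. t * v x) = t * Lp_norm (p+1) v" using Lp_scale[of "p+1" t v] p t0 by simp
      have "Lp_norm (p+1) (\<lambda>x. t * v x) powr (p+1) = t powr (p+1) * R0"
        unfolding lt R0_def using t0 by (simp add: powr_mult)
      then have gl: "g_fun s p a (\<lambda>x. t * v x) = t^2 * (A0 - p * L * (t powr (p-1) * R0))"
        unfolding g_fun_def Hs_norm_sq_scale[OF vH] A0_def[symmetric] L_def[symmetric] tp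
        by (simp add: algebra_simps)
      have "p * L * (t powr (p-1) * R0) \<le> p * \<bar>L\<bar> * (t powr (p-1) * R0)"
        using p R0 by (intro mult_right_mono mult_left_mono) auto
      also have "\<dots> \<le> p * \<bar>L\<bar> * (X * R0)"
        using p tX R0 by (intro mult_right_mono mult_left_mono) auto
      also have "p * \<bar>L\<bar> * (X * R0) < A0"
      proof -
        have "p * \<bar>L\<bar> * (X * R0) = X * (p*\<bar>L\<bar>*R0)" by simp
        also have "\<dots> < X * (2*p*\<bar>L\<bar>*R0 + 1)"
          using Xp p R0 by (intro mult_strict_left_mono) (auto intro: add_nonneg_pos)
        also have "\<dots> = A0" unfolding X_def using den by simp
        finally show ?thesis .
      qed
      finally show ?thesis unfolding gl using t0 by simp
    qed
    have U1: "(\<lambda>x. t * v x) \<in> U1_set s p a" using tH g by (simp add: U1_set_def)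
    have "I_af s p a f (\<lambda>x. t * v x) \<le> t^2 * A0 / 2 - t * f v"
      unfolding Isc[OF vH less_imp_le[OF t0(1)]] A0_def[symmetric] using B0[of v] t0 p
      by (simp add: divide_nonneg_nonneg)
    also have "\<dots> \<le> - (t * f v / 2)"
    proof -
      have "t^2 * A0 = t * (t * A0)" by (simp add: power2_eq_square)
      also have "\<dots> \<le> t * f v" using tF t0 by (intro mult_left_mono) auto
      finally show ?thesis by simp
    qed
    finally have "c0 \<le> ereal (- (t * f v / 2))" using c0le[OF U1] by (meson ereal_less_eq(3) order_trans)
    then show ?thesis using that[of "t * f v / 2"] t0 F0 by simp
  qed
  obtain \<delta> where d0: "\<delta> > 0" and dH: "\<And>w. w \<in> Hs s \<Longrightarrow> Lp_norm (p + 1) w = 1 \<Longrightarrow>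
      \<delta> < (p * L) powr (- 1 / (p - 1)) * ((p - 1) / p) * Hs_norm s w powr (2 * p / (p - 1)) - f w"
  proof -
    obtain z where z: "0 < ereal z" "ereal z < (INF u\<in>{u\<in>Hs s. Lp_norm (p + 1) u = 1}.
           ereal ((p * Linf_norm a) powr (- 1 / (p - 1)) * ((p - 1) / p)
                  * Hs_norm s u powr (2 * p / (p - 1)) - f u))"
      using ereal_dense2[OF assms(12)] by blast
    have "z < (p * L) powr (- 1 / (p - 1)) * ((p - 1) / p) * Hs_norm s w powr (2 * p / (p - 1)) - f w"
      if "w \<in> Hs s" "Lp_norm (p + 1) w = 1" for w
    proof -
      have "ereal z < ereal ((p * Linf_norm a) powr (- 1 / (p - 1)) * ((p - 1) / p)
                  * Hs_norm s w powr (2 * p / (p - 1)) - f w)"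
      proof -
        have "w \<in> {u\<in>Hs s. Lp_norm (p + 1) u = 1}" using that by simp
        then have "(INF u\<in>{u\<in>Hs s. Lp_norm (p + 1) u = 1}.
           ereal ((p * Linf_norm a) powr (- 1 / (p - 1)) * ((p - 1) / p)
                  * Hs_norm s u powr (2 * p / (p - 1)) - f u)) \<le> ereal ((p * Linf_norm a) powr (- 1 / (p - 1)) * ((p - 1) / p)
                  * Hs_norm s w powr (2 * p / (p - 1)) - f w)" by (rule INF_lower)
        then show ?thesis using z(2) by (rule order.strict_trans2[rotated])
      qed
      then show ?thesis by (simp add: L_def)
    qed
    then show ?thesis using that[of z] z by auto
  qed
  define c where "c = (p-1)/p"
  define A0 where "A0 = (2*K/c)^2 + 1"
  define \<gamma> where "\<gamma> = min (\<delta>^2/(2*p*L)) (min (\<delta>^2/(2*A0)) (c^2*A0/8))"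
  define M where "M = K^2 / (4 * (1/2 - 1/(p*(p+1))))"
  have Ubounds: "ereal (I_af s p a f u) \<ge> c0 + ereal (min \<eta> \<gamma>) \<and> I_af s p a f u \<ge> - M"
    if uU: "u \<in> U_set s p a" for u
  proof -
    have uH: "u \<in> Hs s" and nz: "\<not> (AE x in lborel. u x = 0)"
      and g0: "g_fun s p a u = 0" using uU by (auto simp: U_set_def)
    have um [measurable]: "u \<in> borel_measurable lborel" using uH by (simp add: Hs_def)
    define A where "A = Hs_norm_sq s u"
    define \<rho> where "\<rho> = Lp_norm (p+1) u"
    define F where "F = f u"
    have Ap: "A > 0" unfolding A_def by (rule Hs_pos[OF uH nz])
    have AL: "A = p * L * \<rho> powr (p+1)" using g0 unfolding g_fun_def A_def \<rho>_def L_def by simp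
    have r0: "\<rho> \<ge> 0" unfolding \<rho>_def by (rule Lp_nonneg)
    have rp: "\<rho> > 0"
    proof (rule ccontr)
      assume "\<not> \<rho> > 0" then have "\<rho> = 0" using r0 by simp
      then show False using AL Ap by simp
    qed
    have Lp: "L > 0"
    proof (rule ccontr)
      assume "\<not> L > 0"
      then have "p * L * \<rho> powr (p+1) \<le> 0" using p rp
        by (intro mult_nonpos_nonneg mult_nonneg_nonpos) auto
      then show False using AL Ap by simp
    qed
    define R where "R = (\<integral>x. \<bar>u x\<bar> powr (p+1) \<partial>lborel)"
    have rR: "\<rho> = R powr (1/(p+1))" unfolding \<rho>_def R_def Lp_norm_def by simp
    have R0: "R \<ge> 0" unfolding R_def by simp
    have Rint: "integrable lborel (\<lambda>x. \<bar>u x\<bar> powr (p+1))"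
    proof (rule ccontr)
      assume "\<not> ?thesis" then have "R = 0" unfolding R_def by (rule not_integrable_integral_eq)
      then show False using rR rp by simp
    qed
    have rR2: "\<rho> powr (p+1) = R" unfolding rR using R0 p by (simp add: powr_powr)
    have BLR: "Bf u \<le> L * R"
    proof -
      have "Bf u \<le> (\<integral>x. L * \<bar>u x\<bar> powr (p+1) \<partial>lborel)" unfolding Bf_def
      proof (rule integral_mono_AE')
        show "integrable lborel (\<lambda>x. L * \<bar>u x\<bar> powr (p+1))" using Rint by simp
        show "AE x in lborel. 0 \<le> L * \<bar>u x\<bar> powr (p+1)" using Lp by simp
        show "AE x in lborel. a x * max (u x) 0 powr (p + 1) \<le> L * \<bar>u x\<bar> powr (p+1)"
          using aL assms(8)
        proof eventually_elim
          case (elim x)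
          have "max (u x) 0 powr (p+1) \<le> \<bar>u x\<bar> powr (p+1)" using p by (intro powr_mono2) auto
          moreover have "a x \<le> L" using elim by simp
          ultimately show ?case using elim by (intro mult_mono) auto
        qed
      qed
      also have "\<dots> = L * R" unfolding R_def by simp
      finally show ?thesis .
    qed
    have B1: "Bf u \<le> A / p" using BLR AL rR2 p by (simp add: field_simps)
    have Fb: "\<bar>F\<bar> \<le> K * sqrt A" unfolding F_def A_def by (rule Kb[OF uH])
    define w where "w = (\<lambda>x. (1/\<rho>) * u x)"
    have wH: "w \<in> Hs s" unfolding w_def by (rule Hs_scale[OF uH])
    have wL: "Lp_norm (p + 1) w = 1" unfolding w_def using Lp_scale[of "p+1" "1/\<rho>" u] p rp
      by (simp add: \<rho>_def[symmetric])
    have wN: "Hs_norm s w = sqrt ((1/\<rho>)^2 * A)"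
      unfolding w_def Hs_norm_def Hs_norm_sq_scale[OF uH] A_def by simp
    have wF0: "f (\<lambda>x. (1/\<rho>) * u x) = (1/\<rho>) * f u" by (rule f_scale[OF dual uH])
    have wF: "f w = F / \<rho>" unfolding w_def F_def using wF0 by simp
    have "\<delta> < (p-1)/p * A / \<rho> - F / \<rho>"
      using dH[OF wH wL] unfolding wN wF key_alg[OF p Lp rp AL] .
    then have "\<delta> * \<rho> < ((p-1)/p * A / \<rho> - F / \<rho>) * \<rho>" using rp by simp
    also have "\<dots> = (p-1)/p * A - F" using rp p by (simp add: field_simps)
    finally have dD: "\<delta> * \<rho> < (p-1)/p * A - F" .
    have Iu: "I_af s p a f u = A/2 - Bf u/(p+1) - F" unfolding Ieq A_def F_def ..
    have low: "I_af s p a f u \<ge> - M" unfolding Iu M_def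
      by (rule lowb) (use p Ap B0 B1 Fb K0 in auto)
    have core: "(A/2 - Bf u/(p+1) - F) \<ge> 0 \<or> (\<exists>h. 0 < h \<and> h < 1 \<and>
     (A/2 - Bf u/(p+1) - F) \<ge> ((1-h)^2*A/2 - (1-h) powr (p+1)*Bf u/(p+1) - (1-h)*F) + \<gamma>)"
      unfolding \<gamma>_def A0_def c_def
      by (rule real_core[OF p Lp rp AL B0 B1 Fb K0 d0 dD])
    have "ereal (I_af s p a f u) \<ge> c0 + ereal (min \<eta> \<gamma>)"
      using core
    proof
      assume "A/2 - Bf u/(p+1) - F \<ge> 0"
      then have f1: "ereal (I_af s p a f u) \<ge> ereal (-\<eta>) + ereal \<eta>" unfolding Iu by simp
      have f2: "ereal (-\<eta>) + ereal \<eta> \<ge> c0 + ereal (min \<eta> \<gamma>)"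
        using eta(2) by (intro add_mono) auto
      show ?thesis using f2 f1 by (rule order_trans)
    next
      assume "\<exists>h. 0 < h \<and> h < 1 \<and>
       (A/2 - Bf u/(p+1) - F) \<ge> ((1-h)^2*A/2 - (1-h) powr (p+1)*Bf u/(p+1) - (1-h)*F) + \<gamma>"
      then obtain h where h: "0 < h" "h < 1"
        and hI: "(A/2 - Bf u/(p+1) - F) \<ge> ((1-h)^2*A/2 - (1-h) powr (p+1)*Bf u/(p+1) - (1-h)*F) + \<gamma>"
        by blast
      define t where "t = 1 - h"
      have t: "0 < t" "t < 1" using h by (auto simp: t_def)
      have tH: "(\<lambda>x. t * u x) \<in> Hs s" by (rule Hs_scale[OF uH])
      have It: "I_af s p a f (\<lambda>x. t * u x) = (1-h)^2*A/2 - (1-h) powr (p+1)*Bf u/(p+1) - (1-h)*F"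
        using Isc[OF uH, of t] t unfolding A_def F_def t_def by simp
      have tp: "t powr (p+1) = t powr (p-1) * t^2"
      proof -
        have "t powr (p+1) = t powr ((p-1) + 2)" by (simp add: add.commute)
        also have "\<dots> = t powr (p-1) * t powr 2" by (rule powr_add)
        finally show ?thesis using t by (simp add: powr_numeral)
      qed
      have tl1: "t powr (p-1) < 1"
        using powr_less_mono2[of "p-1" t 1] t p by simp
      have lt: "Lp_norm (p+1) (\<lambda>x. t * u x) = t * \<rho>" using Lp_scale[of "p+1" t u] p t
        by (simp add: \<rho>_def)
      have "g_fun s p a (\<lambda>x. t * u x) = t^2 * A - p * L * (t powr (p+1) * \<rho> powr (p+1))"
        unfolding g_fun_def Hs_norm_sq_scale[OF uH] lt A_def[symmetric] L_def[symmetric]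
        using t r0 by (simp add: powr_mult)
      also have "\<dots> = t^2 * A * (1 - t powr (p-1))" unfolding tp using AL
        by (simp add: algebra_simps)
      also have "\<dots> > 0" using t Ap tl1 by simp
      finally have "(\<lambda>x. t * u x) \<in> U1_set s p a" using tH by (simp add: U1_set_def)
      then have "c0 \<le> ereal ((1-h)^2*A/2 - (1-h) powr (p+1)*Bf u/(p+1) - (1-h)*F)"
        unfolding It[symmetric] by (rule c0le)
      then have "c0 + ereal \<gamma> \<le> ereal ((1-h)^2*A/2 - (1-h) powr (p+1)*Bf u/(p+1) - (1-h)*F) + ereal \<gamma>"
        by (intro add_mono) auto
      also have "\<dots> \<le> ereal (I_af s p a f u)" unfolding Iu using hI by simp
      finally have "c0 + ereal \<gamma> \<le> ereal (I_af s p a f u)" .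
      moreover have "c0 + ereal (min \<eta> \<gamma>) \<le> c0 + ereal \<gamma>" by (intro add_mono) auto
      ultimately show ?thesis by simp
    qed
    then show ?thesis using low by simp
  qed
  have gpos: "min \<eta> \<gamma> > 0" if ne: "U_set s p a \<noteq> {}"
  proof -
    obtain u where uU: "u \<in> U_set s p a" using ne by blast
    have uH: "u \<in> Hs s" and nz: "\<not> (AE x in lborel. u x = 0)"
      and g0: "g_fun s p a u = 0" using uU by (auto simp: U_set_def)
    have Ap: "Hs_norm_sq s u > 0" by (rule Hs_pos[OF uH nz])
    have AL: "Hs_norm_sq s u = p * L * Lp_norm (p+1) u powr (p+1)" using g0 unfolding g_fun_def L_def by simp
    have Lp: "L > 0"
    proof (rule ccontr)
      assume "\<not> L > 0"
      then have "p * L * Lp_norm (p+1) u powr (p+1) \<le> 0" using p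
        by (intro mult_nonpos_nonneg mult_nonneg_nonpos) auto
      then show False using AL Ap by simp
    qed
    have c0': "c > 0" using p by (simp add: c_def)
    have "A0 > 0" by (simp add: A0_def add_nonneg_pos)
    then show ?thesis using eta(1) d0 Lp p c0' by (simp add: \<gamma>_def)
  qed
  show ?thesis
  proof (cases "U_set s p a = {}")
    case True
    have "c0 < ereal 0" using eta by (intro le_less_trans[OF eta(2)]) simp
    then have "c0 < top" by (rule less_le_trans) simp
    then show ?thesis using True unfolding c0_def by simp
  next
    case False
    have c1a: "(INF u\<in>U_set s p a. ereal (I_af s p a f u)) \<ge> c0 + ereal (min \<eta> \<gamma>)"
      using Ubounds by (intro INF_greatest) auto
    have c1b: "(INF u\<in>U_set s p a. ereal (I_af s p a f u)) \<ge> ereal (- M)"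
      using Ubounds by (intro INF_greatest) auto
    have "c0 < (INF u\<in>U_set s p a. ereal (I_af s p a f u))"
    proof (cases c0)
      case (real x)
      have "ereal x < ereal (x + min \<eta> \<gamma>)" using gpos[OF False] by simp
      also have "ereal (x + min \<eta> \<gamma>) = ereal x + ereal (min \<eta> \<gamma>)" by (rule plus_ereal.simps(1)[symmetric])
      finally have "c0 < c0 + ereal (min \<eta> \<gamma>)" using real by simp
      then show ?thesis using c1a by (rule order.strict_trans2)
    next
      case PInf then show ?thesis using eta(2) by simp
    next
      case MInf
      have "c0 < ereal (- M)" using MInf by simp
      then show ?thesis using c1b by (rule order.strict_trans2)
    qed
    then show ?thesis unfolding c0_def .
  qed
qed

end
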